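(* Let $\mathbb V$ be the 2-vector space of a 2-term complex $V_1\xrightarrow{\mathrm d}V_0$ and $L$ a Dirac structure of the omni-Lie 2-algebra $\mathfrak{gl}(\mathbb V)\oplus\mathbb V$. Then the normalizer $N_L$ is a sub-Lie 2-algebra of $\mathfrak{gl}(\mathbb V)$, i.e. it is a 2-sub-vector space (in particular $\delta(N_L\cap\mathrm{End}^1(\mathbb V))\subset N_L$) closed under the bracket of $\mathfrak{gl}(\mathbb V)$.
   Context: All vector spaces are finite-dimensional over $\mathbb R$. A 2-sub-vector space has subspaces of objects and morphisms with restricted structure maps; a sub-Lie 2-algebra is a 2-sub-vector space closed under the bracket. For a 2-term complex $V_1\xrightarrow{\mathrm d}V_0$, $\mathbb V$ has objects $V_0$, morphisms $V_0\oplus V_1$ ($u+m$), $s(u+m)=u$, $t(u+m)=u+\mathrm dm$. Let $\mathrm{End}^0_{\mathrm d}(\mathbb V)=\{A=(A_0,A_1):A_0\mathrm d=\mathrm dA_1\}$, $\mathrm{End}^1(\mathbb V)=\mathrm{Hom}(V_0,V_1)$, $\delta\phi=(\mathrm d\phi,\phi\mathrm d)$; brackets $[A,B]$ componentwise commutator, $[A,\phi]=-[\phi,A]=A_1\phi-\phi A_0$, $[\phi,\psi]_\delta=\phi\mathrm d\psi-\psi\mathrm d\phi$. The strict Lie 2-algebra $\mathfrak{gl}(\mathbb V)$ has objects $\mathrm{End}^0_{\mathrm d}(\mathbb V)$, morphisms $A+\phi$ ($\phi\in\mathrm{End}^1(\mathbb V)$ identified with the morphism $0+\phi$), $s(A+\phi)=A$,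 $t(A+\phi)=A+\delta\phi$, bracket $[A+\phi,B+\psi]=[A,B]+[\phi,\psi]_\delta+[A,\psi]+[\phi,B]$, and acts on $\mathbb V$ by $A(u)=A_0u$, $(A+\phi)(u+m)=A_0u+(A_1m+\phi(u+\mathrm dm))$. The omni-Lie 2-algebra is $\mathfrak{gl}(\mathbb V)\oplus\mathbb V$ with pairing $\langle A+\phi+u+m,B+\psi+v+n\rangle=\tfrac12((A+\phi)(v+n)+(B+\psi)(u+m))$ and bracket $[\![A+\phi+u+m,B+\psi+v+n]\!]=[A+\phi,B+\psi]+\tfrac12((A+\phi)(v+n)-(B+\psi)(u+m))$ (similar formulas on objects), and $\{e_1,e_2\}=[\![e_1,e_2]\!]+\langle e_1,e_2\rangle$, i.e. $\{A+\phi+u+m,B+\psi+v+n\}=[A+\phi,B+\psi]+(A+\phi)(v+n)$. $L^\perp=\{e:\langle e,l\rangle=0\ \forall l\in L\}$; a Dirac structure is a 2-sub-vector space $L=L^\perp$ closed under $[\![\cdot,\cdot]\!]$. The normalizer of $K\subset\mathfrak{gl}(\mathbb V)\oplus\mathbb V$ is $N_K=\{N\in\mathfrak{gl}(\mathbb V):\{N,k\}\in K\ \forall k\in K\}$ (levelwise). *)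

theory Defs
  imports "HOL-Analysis.Analysis"
begin

text \<open>V0 = real^'n, V1 = real^'m (finite-dimensional real vector spaces);
linear maps are represented by matrices. The differential d : V1 -> V0 is
d :: real^'m^'n. A degree-0 endomorphism is a pair (A0, A1) with
A0 :: real^'n^'n, A1 :: real^'m^'m; a degree-1 map phi : V0 -> V1 is
phi :: real^'n^'m.\<close>

type_synonym ('n,'m) end0 = "(real^'n^'n) \<times> (real^'m^'m)"
type_synonym ('n,'m) end1 = "real^'n^'m"
type_synonym ('n,'m) glmor = "('n,'m) end0 \<times> ('n,'m) end1"
type_synonym ('n,'m) vmor = "(real^'n) \<times> (real^'m)"
type_synonym ('n,'m) omniob = "('n,'m) end0 \<times> (real^'n)"
type_synonym ('n,'m) omnimor = "('n,'m) glmor \<times> ('n,'m) vmor"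

text \<open>Ob, Mor: spaces of objects and morphisms; s, t source and target, i identity,
cmp g f = composite "g after f" (defined when t f = s g).\<close>
definition two_sub_vector_space ::
  "'o::real_vector set \<Rightarrow> 'a::real_vector set \<Rightarrow> ('a \<Rightarrow> 'o) \<Rightarrow> ('a \<Rightarrow> 'o) \<Rightarrow> ('o \<Rightarrow> 'a)
   \<Rightarrow> ('a \<Rightarrow> 'a \<Rightarrow> 'a) \<Rightarrow> 'o set \<Rightarrow> 'a set \<Rightarrow> bool" where
  "two_sub_vector_space Ob Mor s t i cmp C0 C1 \<longleftrightarrow>
     C0 \<subseteq> Ob \<and> subspace C0 \<and> C1 \<subseteq> Mor \<and> subspace C1 \<and>
     s ` C1 \<subseteq> C0 \<and> t ` C1 \<subseteq> C0 \<and> i ` C0 \<subseteq> C1 \<and>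
     (\<forall>f\<in>C1. \<forall>g\<in>C1. t f = s g \<longrightarrow> cmp g f \<in> C1)"

definition End0 :: "real^'m^'n \<Rightarrow> ('n::finite,'m::finite) end0 set" where
  "End0 d = {(A0, A1). A0 ** d = d ** A1}"

definition delta :: "real^'m^'n \<Rightarrow> ('n::finite,'m::finite) end1 \<Rightarrow> ('n::finite,'m::finite) end0" where
  "delta d phi = (d ** phi, phi ** d)"

definition br0 :: "('n::finite,'m::finite) end0 \<Rightarrow> ('n::finite,'m::finite) end0 \<Rightarrow> ('n::finite,'m::finite) end0" where
  "br0 A B = (fst A ** fst B - fst B ** fst A, snd A ** snd B - snd B ** snd A)"

definition br01 :: "('n::finite,'m::finite) end0 \<Rightarrow> ('n::finite,'m::finite) end1 \<Rightarrow> ('n::finite,'m::finite) end1" where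
  "br01 A phi = snd A ** phi - phi ** fst A"

definition br11 :: "real^'m^'n \<Rightarrow> ('n::finite,'m::finite) end1 \<Rightarrow> ('n::finite,'m::finite) end1 \<Rightarrow> ('n::finite,'m::finite) end1" where
  "br11 d phi psi = phi ** d ** psi - psi ** d ** phi"

text \<open>[A+phi, B+psi] = [A,B] + [phi,psi]_delta + [A,psi] + [phi,B], with [phi,B] = -[B,phi]\<close>
definition br1 :: "real^'m^'n \<Rightarrow> ('n::finite,'m::finite) glmor \<Rightarrow> ('n::finite,'m::finite) glmor \<Rightarrow> ('n::finite,'m::finite) glmor" where
  "br1 d X Y = (br0 (fst X) (fst Y),
                br11 d (snd X) (snd Y) + br01 (fst X) (snd Y) - br01 (fst Y) (snd X))"

definition gl_s :: "('n::finite,'m::finite) glmor \<Rightarrow> ('n::finite,'m::finite) end0" where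
  "gl_s X = fst X"
definition gl_t :: "real^'m^'n \<Rightarrow> ('n::finite,'m::finite) glmor \<Rightarrow> ('n::finite,'m::finite) end0" where
  "gl_t d X = fst X + delta d (snd X)"
definition gl_i :: "('n::finite,'m::finite) end0 \<Rightarrow> ('n::finite,'m::finite) glmor" where
  "gl_i A = (A, 0)"
definition gl_comp :: "('n::finite,'m::finite) glmor \<Rightarrow> ('n::finite,'m::finite) glmor \<Rightarrow> ('n::finite,'m::finite) glmor" where
  "gl_comp Y X = (fst X, snd X + snd Y)"

definition act0 :: "('n::finite,'m::finite) end0 \<Rightarrow> real^'n \<Rightarrow> real^'n" where
  "act0 A u = fst A *v u"

definition act1 :: "real^'m^'n \<Rightarrow> ('n::finite,'m::finite) glmor \<Rightarrow> ('n::finite,'m::finite) vmor \<Rightarrow> ('n::finite,'m::finite) vmor" where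
  "act1 d X x = (fst (fst X) *v fst x,
                 snd (fst X) *v snd x + snd X *v (fst x + d *v snd x))"

definition omni_ob :: "real^'m^'n \<Rightarrow> ('n::finite,'m::finite) omniob set" where
  "omni_ob d = End0 d \<times> UNIV"
definition omni_mor :: "real^'m^'n \<Rightarrow> ('n::finite,'m::finite) omnimor set" where
  "omni_mor d = (End0 d \<times> UNIV) \<times> UNIV"

definition omni_s :: "('n::finite,'m::finite) omnimor \<Rightarrow> ('n::finite,'m::finite) omniob" where
  "omni_s e = (fst (fst e), fst (snd e))"
definition omni_t :: "real^'m^'n \<Rightarrow> ('n::finite,'m::finite) omnimor \<Rightarrow> ('n::finite,'m::finite) omniob" where
  "omni_t d e = (fst (fst e) + delta d (snd (fst e)), fst (snd e) + d *v snd (snd e))"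
definition omni_i :: "('n::finite,'m::finite) omniob \<Rightarrow> ('n::finite,'m::finite) omnimor" where
  "omni_i a = ((fst a, 0), (snd a, 0))"
text \<open>composite of e : a -> b followed by f : b -> c\<close>
definition omni_comp :: "('n::finite,'m::finite) omnimor \<Rightarrow> ('n::finite,'m::finite) omnimor \<Rightarrow> ('n::finite,'m::finite) omnimor" where
  "omni_comp f e = ((fst (fst e), snd (fst e) + snd (fst f)),
                    (fst (snd e), snd (snd e) + snd (snd f)))"

definition pair0 :: "('n::finite,'m::finite) omniob \<Rightarrow> ('n::finite,'m::finite) omniob \<Rightarrow> real^'n" where
  "pair0 a b = (1/2) *\<^sub>R (act0 (fst a) (snd b) + act0 (fst b) (snd a))"
definition pair1 :: "real^'m^'n \<Rightarrow> ('n::finite,'m::finite) omnimor \<Rightarrow> ('n::finite,'m::finite) omnimor \<Rightarrow> ('n::finite,'m::finite) vmor" where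
  "pair1 d e f = (1/2) *\<^sub>R (act1 d (fst e) (snd f) + act1 d (fst f) (snd e))"

definition dbr0 :: "('n::finite,'m::finite) omniob \<Rightarrow> ('n::finite,'m::finite) omniob \<Rightarrow> ('n::finite,'m::finite) omniob" where
  "dbr0 a b = (br0 (fst a) (fst b), (1/2) *\<^sub>R (act0 (fst a) (snd b) - act0 (fst b) (snd a)))"
definition dbr1 :: "real^'m^'n \<Rightarrow> ('n::finite,'m::finite) omnimor \<Rightarrow> ('n::finite,'m::finite) omnimor \<Rightarrow> ('n::finite,'m::finite) omnimor" where
  "dbr1 d e f = (br1 d (fst e) (fst f), (1/2) *\<^sub>R (act1 d (fst e) (snd f) - act1 d (fst f) (snd e)))"

text \<open>{e1,e2} = [[e1,e2]] + <e1,e2>\<close>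
definition cbr0 :: "('n::finite,'m::finite) omniob \<Rightarrow> ('n::finite,'m::finite) omniob \<Rightarrow> ('n::finite,'m::finite) omniob" where
  "cbr0 a b = (br0 (fst a) (fst b), act0 (fst a) (snd b))"
definition cbr1 :: "real^'m^'n \<Rightarrow> ('n::finite,'m::finite) omnimor \<Rightarrow> ('n::finite,'m::finite) omnimor \<Rightarrow> ('n::finite,'m::finite) omnimor" where
  "cbr1 d e f = (br1 d (fst e) (fst f), act1 d (fst e) (snd f))"

definition perp0 :: "real^'m^'n \<Rightarrow> ('n::finite,'m::finite) omniob set \<Rightarrow> ('n::finite,'m::finite) omniob set" where
  "perp0 d L0 = {e \<in> omni_ob d. \<forall>l\<in>L0. pair0 e l = 0}"
definition perp1 :: "real^'m^'n \<Rightarrow> ('n::finite,'m::finite) omnimor set \<Rightarrow> ('n::finite,'m::finite) omnimor set" where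
  "perp1 d L1 = {e \<in> omni_mor d. \<forall>l\<in>L1. pair1 d e l = 0}"

definition dirac :: "real^'m^'n \<Rightarrow> ('n::finite,'m::finite) omniob set \<Rightarrow> ('n::finite,'m::finite) omnimor set \<Rightarrow> bool" where
  "dirac d L0 L1 \<longleftrightarrow>
     two_sub_vector_space (omni_ob d) (omni_mor d) omni_s (omni_t d) omni_i omni_comp L0 L1 \<and>
     L0 = perp0 d L0 \<and> L1 = perp1 d L1 \<and>
     (\<forall>a\<in>L0. \<forall>b\<in>L0. dbr0 a b \<in> L0) \<and>
     (\<forall>e\<in>L1. \<forall>f\<in>L1. dbr1 d e f \<in> L1)"

definition normalizer0 :: "real^'m^'n \<Rightarrow> ('n::finite,'m::finite) omniob set \<Rightarrow> ('n::finite,'m::finite) end0 set" where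
  "normalizer0 d L0 = {N \<in> End0 d. \<forall>k\<in>L0. cbr0 (N, 0) k \<in> L0}"
definition normalizer1 :: "real^'m^'n \<Rightarrow> ('n::finite,'m::finite) omnimor set \<Rightarrow> ('n::finite,'m::finite) glmor set" where
  "normalizer1 d L1 = {N \<in> End0 d \<times> UNIV. \<forall>k\<in>L1. cbr1 d (N, 0) k \<in> L1}"

definition sub_lie2_gl :: "real^'m^'n \<Rightarrow> ('n::finite,'m::finite) end0 set \<Rightarrow> ('n::finite,'m::finite) glmor set \<Rightarrow> bool" where
  "sub_lie2_gl d N0 N1 \<longleftrightarrow>
     two_sub_vector_space (End0 d) (End0 d \<times> UNIV) gl_s (gl_t d) gl_i gl_comp N0 N1 \<and>
     (\<forall>A\<in>N0. \<forall>B\<in>N0. br0 A B \<in> N0) \<and>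
     (\<forall>X\<in>N1. \<forall>Y\<in>N1. br1 d X Y \<in> N1)"

end

theory Submission
  imports Defs
begin

lemma mx_radd: "((A::real^'n^'m) + B) ** (C::real^'p^'n) = A ** C + B ** C"
  by (vector matrix_matrix_mult_def sum.distrib[symmetric] field_simps)
lemma mx_rsub: "((A::real^'n^'m) - B) ** (C::real^'p^'n) = A ** C - B ** C"
  by (vector matrix_matrix_mult_def sum_subtractf[symmetric] field_simps)
lemma mx_lsub: "(A::real^'n^'m) ** ((B::real^'p^'n) - C) = A ** B - A ** C"
  by (vector matrix_matrix_mult_def sum_subtractf[symmetric] field_simps)
lemma mx_assoc: "((A::real^'n^'m) ** B) ** C = A ** (B ** C)"
  by (simp add: matrix_mul_assoc)
lemma mx_vassoc: "(A::real^'n^'m) *v ((B::real^'p^'n) *v x) = (A ** B) *v x"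
  by (simp add: matrix_vector_mul_assoc)
lemma mx_lscale: "(c *\<^sub>R (A::real^'n^'m)) ** (B::real^'p^'n) = c *\<^sub>R (A ** B)"
  by (simp add: scalar_matrix_assoc)
lemma mx_rscale: "(A::real^'n^'m) ** (c *\<^sub>R (B::real^'p^'n)) = c *\<^sub>R (A ** B)"
  by (simp add: matrix_scalar_ac scalar_matrix_assoc)
lemma mx_vscale: "(c *\<^sub>R (A::real^'n^'m)) *v x = c *\<^sub>R (A *v x)"
  by (simp add: scaleR_matrix_vector_assoc)
lemma mx_vscale2: "(A::real^'n^'m) *v (c *\<^sub>R x) = c *\<^sub>R (A *v x)"
  by (simp add: matrix_vector_mult_scaleR)

lemmas mxs = mx_radd mx_rsub mx_lsub matrix_add_ldistrib mx_assoc mx_vassoc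
  mx_lscale mx_rscale mx_vscale mx_vscale2

lemma End0_fst: "A \<in> End0 d \<Longrightarrow> fst A ** d = d ** snd A"
  by (auto simp: End0_def)

lemma End0_sub: "subspace (End0 d)"
  unfolding subspace_def End0_def
  by (auto simp: mxs matrix_add_ldistrib mx_rscale zero_prod_def)

lemma jac1:
  fixes d :: "real^'m^'n" and X Y Z :: "('n::finite,'m::finite) glmor"
  assumes "fst X \<in> End0 d" "fst Y \<in> End0 d" "fst Z \<in> End0 d"
  shows "br1 d (br1 d X Y) Z = br1 d X (br1 d Y Z) - br1 d Y (br1 d X Z)"
proof -
  obtain A0 A1 phi B0 B1 psi C0 C1 chi where X: "X = ((A0,A1),phi)" and Y: "Y = ((B0,B1),psi)"
     and Z: "Z = ((C0,C1),chi)" by (metis prod.collapse)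
  have a: "A0 ** d = d ** A1" "B0 ** d = d ** B1" "C0 ** d = d ** C1" using assms by (auto simp: End0_def X Y Z)
  have a': "A0 ** (d ** W) = d ** (A1 ** W)" "B0 ** (d ** W) = d ** (B1 ** W)" "C0 ** (d ** W) = d ** (C1 ** W)" for W :: "real^'q^'m"
    using a by (simp_all add: matrix_mul_assoc)
  show ?thesis unfolding X Y Z br1_def br0_def br01_def br11_def
    by (simp add: mxs a a' algebra_simps)
qed

lemma rep1:
  fixes d :: "real^'m^'n" and X Y :: "('n::finite,'m::finite) glmor"
  assumes "fst X \<in> End0 d" "fst Y \<in> End0 d"
  shows "act1 d (br1 d X Y) x = act1 d X (act1 d Y x) - act1 d Y (act1 d X x)"
proof -
  obtain A0 A1 phi B0 B1 psi where X: "X = ((A0,A1),phi)" and Y: "Y = ((B0,B1),psi)"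
     by (metis prod.collapse)
  have a: "A0 ** d = d ** A1" "B0 ** d = d ** B1" using assms by (auto simp: End0_def X Y)
  have a': "A0 ** (d ** W) = d ** (A1 ** W)" "B0 ** (d ** W) = d ** (B1 ** W)" for W :: "real^'q^'m"
    using a by (simp_all add: matrix_mul_assoc)
  show ?thesis unfolding X Y br1_def br0_def br01_def br11_def act1_def
    by (simp add: mxs a a' algebra_simps)
qed

lemma jac0:
  fixes A B C :: "('n::finite,'m::finite) end0"
  shows "br0 (br0 A B) C = br0 A (br0 B C) - br0 B (br0 A C)"
  unfolding br0_def by (simp add: mxs algebra_simps)

lemma rep0: "act0 (br0 A B) x = act0 A (act0 B x) - act0 B (act0 A x)"
  unfolding br0_def act0_def by (simp add: mxs algebra_simps)

lemma br0_End0: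
  fixes d :: "real^'m::finite^'n::finite" and A B :: "('n,'m) end0"
  assumes "A \<in> End0 d" "B \<in> End0 d" shows "br0 A B \<in> End0 d"
proof -
  obtain A0 A1 B0 B1 where X: "A = (A0,A1)" and Y: "B = (B0,B1)" by (metis prod.collapse)
  have a: "A0 ** d = d ** A1" "B0 ** d = d ** B1" using assms by (auto simp: End0_def X Y)
  have a': "A0 ** (d ** W) = d ** (A1 ** W)" "B0 ** (d ** W) = d ** (B1 ** W)" for W :: "real^'q^'m"
    using a by (simp_all add: matrix_mul_assoc)
  show ?thesis unfolding X Y br0_def End0_def by (simp add: mxs a a')
qed


lemma cbr0_add: "cbr0 (A + B, 0) k = cbr0 (A,0) k + cbr0 (B,0) k"
  by (simp add: cbr0_def br0_def act0_def prod_eq_iff mxs algebra_simps)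
lemma cbr0_scale: "cbr0 (c *\<^sub>R A, 0) k = c *\<^sub>R cbr0 (A,0) k"
  by (simp add: cbr0_def br0_def act0_def prod_eq_iff mxs algebra_simps)
lemma cbr0_zero: "cbr0 (0, 0) k = 0"
  by (simp add: cbr0_def br0_def act0_def prod_eq_iff mxs zero_prod_def)
lemma cbr0_br: "cbr0 (br0 A B, 0) k = cbr0 (A,0) (cbr0 (B,0) k) - cbr0 (B,0) (cbr0 (A,0) k)"
  by (simp add: cbr0_def prod_eq_iff jac0 rep0)

lemma cbr1_add: "cbr1 d (X + Y, 0) k = cbr1 d (X,0) k + cbr1 d (Y,0) k"
  by (simp add: cbr1_def br1_def br0_def br01_def br11_def act1_def prod_eq_iff mxs algebra_simps)
lemma cbr1_scale: "cbr1 d (c *\<^sub>R X, 0) k = c *\<^sub>R cbr1 d (X,0) k"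
  by (simp add: cbr1_def br1_def br0_def br01_def br11_def act1_def prod_eq_iff mxs algebra_simps)
lemma cbr1_zero: "cbr1 d (0, 0) k = 0"
  by (simp add: cbr1_def br1_def br0_def br01_def br11_def act1_def prod_eq_iff mxs zero_prod_def)
lemma cbr1_br:
  assumes "fst X \<in> End0 d" "fst Y \<in> End0 d" "fst (fst k) \<in> End0 d"
  shows "cbr1 d (br1 d X Y, 0) k = cbr1 d (X,0) (cbr1 d (Y,0) k) - cbr1 d (Y,0) (cbr1 d (X,0) k)"
  using assms by (simp add: cbr1_def prod_eq_iff jac1 rep1)

lemma s_eq: "omni_s (cbr1 d (X,0) (omni_i k)) = cbr0 (fst X,0) k"
  by (simp add: omni_s_def omni_i_def cbr1_def cbr0_def br1_def act1_def act0_def)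

lemma t_eq:
  fixes d :: "real^'m::finite^'n::finite" and k :: "('n,'m) omniob"
  assumes "fst k \<in> End0 d"
  shows "omni_t d (cbr1 d ((A,phi),0) (omni_i k)) = cbr0 (A + delta d phi, 0) k"
proof -
  obtain K0 K1 u where k: "k = ((K0,K1),u)" by (metis prod.collapse)
  have a: "K0 ** d = d ** K1" using assms by (auto simp: End0_def k)
  have a': "K0 ** (d ** W) = d ** (K1 ** W)" for W :: "real^'q^'m"
    using a by (simp_all add: matrix_mul_assoc)
  show ?thesis unfolding k
    by (simp add: omni_t_def omni_i_def cbr1_def cbr0_def br1_def br0_def br01_def br11_def
      act1_def act0_def delta_def prod_eq_iff mxs a a' algebra_simps)
qed


definition Q :: "real^'m^'n \<Rightarrow> ('n::finite,'m::finite) omnimor \<Rightarrow> ('n,'m) omnimor \<Rightarrow> ('n,'m) vmor" where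
  "Q d x y = act1 d (fst x) (snd y) + act1 d (fst y) (snd x)"

lemma key:
  fixes d :: "real^'m::finite^'n::finite" and k f :: "('n,'m) omnimor"
  assumes "A \<in> End0 d" "fst (fst k) \<in> End0 d"
  shows "fst (Q d (cbr1 d ((A,0),0) k) f) = fst (Q d (omni_i (cbr0 (A,0) (omni_s k))) f)"
    and "snd (Q d (cbr1 d ((A,0),0) k) f) = snd A *v snd (Q d k f)
           - snd (Q d k (omni_i (cbr0 (A,0) (omni_t d f))))
           + snd (Q d (omni_i (cbr0 (A,0) (omni_s k))) f)
           - snd A *v snd (Q d (omni_i (omni_s k)) f)"
proof -
  obtain A0 A1 where Ae: "A = (A0,A1)" by (metis prod.collapse)
  obtain K0 K1 psi u m where k: "k = (((K0,K1),psi),(u,m))" by (metis prod.collapse)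
  obtain B0 B1 w v p where f: "f = (((B0,B1),w),(v,p))" by (metis prod.collapse)
  have a: "A0 ** d = d ** A1" "K0 ** d = d ** K1" using assms by (auto simp: End0_def Ae k)
  have a': "A0 ** (d ** W) = d ** (A1 ** W)" "K0 ** (d ** W) = d ** (K1 ** W)" for W :: "real^'q^'m"
    using a by (simp_all add: matrix_mul_assoc)
  show "fst (Q d (cbr1 d ((A,0),0) k) f) = fst (Q d (omni_i (cbr0 (A,0) (omni_s k))) f)"
    unfolding Ae k f
    by (simp add: Q_def omni_t_def omni_s_def omni_i_def cbr1_def cbr0_def br1_def br0_def br01_def br11_def
      act1_def act0_def delta_def mxs a a' algebra_simps)
  show "snd (Q d (cbr1 d ((A,0),0) k) f) = snd A *v snd (Q d k f)
           - snd (Q d k (omni_i (cbr0 (A,0) (omni_t d f))))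
           + snd (Q d (omni_i (cbr0 (A,0) (omni_s k))) f)
           - snd A *v snd (Q d (omni_i (omni_s k)) f)"
    unfolding Ae k f
    by (simp add: Q_def omni_t_def omni_s_def omni_i_def cbr1_def cbr0_def br1_def br0_def br01_def br11_def
      act1_def act0_def delta_def mxs a a' algebra_simps)
qed


lemma pair1_Q: "pair1 d e f = (1/2) *\<^sub>R Q d e f"
  by (simp add: pair1_def Q_def)

theorem mainTheorem11:
  fixes d :: "real^'m^'n"
    and L0 :: "('n,'m) omniob set" and L1 :: "('n,'m) omnimor set"
  assumes "dirac d L0 L1"
  shows "sub_lie2_gl d (normalizer0 d L0) (normalizer1 d L1)
         \<and> (\<forall>phi. (0, phi) \<in> normalizer1 d L1 \<longrightarrow> delta d phi \<in> normalizer0 d L0)"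
proof -
  have tsv: "two_sub_vector_space (omni_ob d) (omni_mor d) omni_s (omni_t d) omni_i omni_comp L0 L1"
    and p1: "L1 = perp1 d L1" using assms by (auto simp: dirac_def)
  have L0s: "subspace L0" and L0O: "L0 \<subseteq> omni_ob d" and L1s: "subspace L1" and L1M: "L1 \<subseteq> omni_mor d"
    and sL: "\<And>e. e \<in> L1 \<Longrightarrow> omni_s e \<in> L0" and tL: "\<And>e. e \<in> L1 \<Longrightarrow> omni_t d e \<in> L0"
    and iL: "\<And>a. a \<in> L0 \<Longrightarrow> omni_i a \<in> L1"
    using tsv unfolding two_sub_vector_space_def by auto
  have K0: "\<And>k. k \<in> L0 \<Longrightarrow> fst k \<in> End0 d" using L0O by (auto simp: omni_ob_def)
  have K1: "\<And>k. k \<in> L1 \<Longrightarrow> fst (fst k) \<in> End0 d" using L1M by (auto simp: omni_mor_def)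
  let ?N0 = "normalizer0 d L0" and ?N1 = "normalizer1 d L1"
  have N0D: "\<And>A k. A \<in> ?N0 \<Longrightarrow> k \<in> L0 \<Longrightarrow> cbr0 (A,0) k \<in> L0" and N0E: "\<And>A. A \<in> ?N0 \<Longrightarrow> A \<in> End0 d"
    by (auto simp: normalizer0_def)
  have N0I: "\<And>A. A \<in> End0 d \<Longrightarrow> (\<And>k. k \<in> L0 \<Longrightarrow> cbr0 (A,0) k \<in> L0) \<Longrightarrow> A \<in> ?N0"
    by (auto simp: normalizer0_def)
  have N1D: "\<And>X k. X \<in> ?N1 \<Longrightarrow> k \<in> L1 \<Longrightarrow> cbr1 d (X,0) k \<in> L1" and N1E: "\<And>X. X \<in> ?N1 \<Longrightarrow> fst X \<in> End0 d"
    by (auto simp: normalizer1_def)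
  have N1I: "\<And>X. fst X \<in> End0 d \<Longrightarrow> (\<And>k. k \<in> L1 \<Longrightarrow> cbr1 d (X,0) k \<in> L1) \<Longrightarrow> X \<in> ?N1"
    by (auto simp: normalizer1_def mem_Times_iff)
  have E0: "subspace (End0 d)" by (rule End0_sub)
  have sN0: "subspace ?N0"
    unfolding subspace_def
  proof (intro conjI ballI allI)
    show "0 \<in> ?N0" using subspace_0[OF E0] subspace_0[OF L0s]
      by (intro N0I) (auto simp: cbr0_zero[unfolded zero_prod_def] zero_prod_def)
    fix A B assume "A \<in> ?N0" "B \<in> ?N0"
    then show "A + B \<in> ?N0"
      by (intro N0I) (auto simp: cbr0_add intro: subspace_add[OF E0] subspace_add[OF L0s] N0D N0E)
  next
    fix c A assume "A \<in> ?N0"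
    then show "c *\<^sub>R A \<in> ?N0"
      by (intro N0I) (auto simp: cbr0_scale intro: subspace_scale[OF E0] subspace_scale[OF L0s] N0D N0E)
  qed
  have sN1: "subspace ?N1"
    unfolding subspace_def
  proof (intro conjI ballI allI)
    show "0 \<in> ?N1" using subspace_0[OF E0] subspace_0[OF L1s]
      by (intro N1I) (auto simp: cbr1_zero[unfolded zero_prod_def] zero_prod_def)
    fix A B assume "A \<in> ?N1" "B \<in> ?N1"
    then show "A + B \<in> ?N1"
      by (intro N1I) (auto simp: cbr1_add intro: subspace_add[OF E0] subspace_add[OF L1s] N1D N1E)
  next
    fix c A assume "A \<in> ?N1"
    then show "c *\<^sub>R A \<in> ?N1"
      by (intro N1I) (auto simp: cbr1_scale intro: subspace_scale[OF E0] subspace_scale[OF L1s] N1D N1E)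
  qed
  have sN: "fst X \<in> ?N0" if X: "X \<in> ?N1" for X
  proof (rule N0I)
    show "fst X \<in> End0 d" using N1E[OF X] .
    fix k assume "k \<in> L0"
    then have "cbr1 d (X,0) (omni_i k) \<in> L1" using N1D[OF X] iL by blast
    from sL[OF this] show "cbr0 (fst X, 0) k \<in> L0" by (simp add: s_eq)
  qed
  have tN: "gl_t d X \<in> ?N0" if X: "X \<in> ?N1" for X
  proof (rule N0I)
    have "delta d (snd X) \<in> End0 d" by (simp add: delta_def End0_def matrix_mul_assoc)
    then show "gl_t d X \<in> End0 d" unfolding gl_t_def using N1E[OF X] subspace_add[OF E0] by blast
    fix k assume k: "k \<in> L0"
    then have "cbr1 d (X,0) (omni_i k) \<in> L1" using N1D[OF X] iL by blast
    from tL[OF this] t_eq[OF K0[OF k], of "fst X" "snd X"]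
    show "cbr0 (gl_t d X, 0) k \<in> L0" by (simp add: gl_t_def)
  qed
  have iN: "gl_i A \<in> ?N1" if A: "A \<in> ?N0" for A
  proof (rule N1I)
    show "fst (gl_i A) \<in> End0 d" using N0E[OF A] by (simp add: gl_i_def)
    fix k assume k: "k \<in> L1"
    let ?e = "cbr1 d ((A,0),0) k"
    have "?e \<in> perp1 d L1"
      unfolding perp1_def
    proof (intro CollectI conjI ballI)
      show "?e \<in> omni_mor d" using br0_End0[OF N0E[OF A] K1[OF k]]
        by (simp add: omni_mor_def cbr1_def br1_def mem_Times_iff)
      fix f assume f: "f \<in> L1"
      have z: "x \<in> L1 \<Longrightarrow> y \<in> L1 \<Longrightarrow> Q d x y = 0" for x y
        using p1 by (auto simp: perp1_def pair1_Q)
      have sk: "omni_s k \<in> L0" by (rule sL[OF k])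
      have h1: "Q d k f = 0" using z k f by blast
      have h2: "Q d k (omni_i (cbr0 (A,0) (omni_t d f))) = 0"
        using z[OF k iL[OF N0D[OF A tL[OF f]]]] .
      have h3: "Q d (omni_i (cbr0 (A,0) (omni_s k))) f = 0"
        using z[OF iL[OF N0D[OF A sk]] f] .
      have h4: "Q d (omni_i (omni_s k)) f = 0" using z[OF iL[OF sk] f] .
      have "Q d ?e f = 0"
        using key[OF N0E[OF A] K1[OF k], of f] h1 h2 h3 h4 by (simp add: prod_eq_iff)
      then show "pair1 d ?e f = 0" by (simp add: pair1_Q)
    qed
    then show "cbr1 d (gl_i A, 0) k \<in> L1" using p1 by (simp add: gl_i_def)
  qed
  have cN: "gl_comp g f \<in> ?N1" if f: "f \<in> ?N1" and g: "g \<in> ?N1" and fg: "gl_t d f = gl_s g" for f g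
  proof -
    have "gl_comp g f = (f + g) - gl_i (gl_t d f)"
      using fg by (auto simp: gl_comp_def gl_i_def gl_s_def gl_t_def prod_eq_iff algebra_simps)
    also have "\<dots> \<in> ?N1"
      by (intro subspace_diff[OF sN1] subspace_add[OF sN1] f g iN tN)
    finally show ?thesis .
  qed
  have bN0: "br0 A B \<in> ?N0" if A: "A \<in> ?N0" and B: "B \<in> ?N0" for A B
  proof (rule N0I)
    show "br0 A B \<in> End0 d" by (rule br0_End0[OF N0E[OF A] N0E[OF B]])
    fix k assume k: "k \<in> L0"
    show "cbr0 (br0 A B, 0) k \<in> L0" unfolding cbr0_br
      by (intro subspace_diff[OF L0s] N0D[OF A] N0D[OF B] k)
  qed
  have bN1: "br1 d X Y \<in> ?N1" if X: "X \<in> ?N1" and Y: "Y \<in> ?N1" for X Y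
  proof (rule N1I)
    show "fst (br1 d X Y) \<in> End0 d" using br0_End0[OF N1E[OF X] N1E[OF Y]] by (simp add: br1_def)
    fix k assume k: "k \<in> L1"
    show "cbr1 d (br1 d X Y, 0) k \<in> L1" unfolding cbr1_br[OF N1E[OF X] N1E[OF Y] K1[OF k]]
      by (intro subspace_diff[OF L1s] N1D[OF X] N1D[OF Y] k)
  qed
  have "sub_lie2_gl d ?N0 ?N1"
    unfolding sub_lie2_gl_def two_sub_vector_space_def
  proof (intro conjI ballI allI impI)
    show "?N0 \<subseteq> End0 d" using N0E by blast
    show "?N1 \<subseteq> End0 d \<times> UNIV" using N1E by (auto simp: mem_Times_iff)
    show "gl_s ` ?N1 \<subseteq> ?N0" using sN by (auto simp: gl_s_def)
    show "gl_t d ` ?N1 \<subseteq> ?N0" using tN by auto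
    show "gl_i ` ?N0 \<subseteq> ?N1" using iN by auto
  qed (use sN0 sN1 cN bN0 bN1 in auto)
  moreover have "delta d phi \<in> ?N0" if "(0, phi) \<in> ?N1" for phi
    using tN[OF that] by (simp add: gl_t_def)
  ultimately show ?thesis by blast
qed

end
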